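(* For every $\beta\in\mathbb{R}^d$, the population EM update satisfies $\|M(\beta)\|\le3\sqrt{\sigma^2+\|\beta^*\|^2}$.
   Context: Mixed linear regression with two symmetric components: $(X,Y)\in\mathbb{R}^d\times\mathbb{R}$ with $Y=Z\langle\beta^*,X\rangle+e$, where $X\sim N(0,I_d)$, $e\sim N(0,\sigma^2)$ with known $\sigma>0$, $Z$ uniform on $\{-1,+1\}$, and $X,e,Z$ independent. The population EM operator is $M(\beta)=\mathbb{E}[\tanh(\langle X,\beta\rangle Y/\sigma^2)\,YX]$, with $X\sim N(0,I_d)$, $Y|X\sim N(\langle X,\beta^*\rangle,\sigma^2)$. *)

theory Defs
  imports "HOL-Probability.Probability"
begin

definition std_gauss_vec_density :: "real ^ 'd \<Rightarrow> real" where
  "std_gauss_vec_density x = (\<Prod>i\<in>UNIV. normal_density 0 1 (x $ i))"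

text \<open>Population EM operator for symmetric two-component mixed linear regression:
  M(beta) = E[tanh(<X,beta> Y / sigma^2) Y X] with X ~ N(0,I_d) and
  Y | X ~ N(<X,beta_star>, sigma^2), written as an iterated Lebesgue (Bochner) integral.\<close>
definition EM_M :: "real \<Rightarrow> real ^ 'd \<Rightarrow> real ^ 'd \<Rightarrow> real ^ 'd" where
  "EM_M \<sigma> \<beta>s \<beta> =
     (\<integral>x. (std_gauss_vec_density x *
              (\<integral>y. normal_density (x \<bullet> \<beta>s) \<sigma> y * (tanh ((x \<bullet> \<beta>) * y / \<sigma>\<^sup>2) * y) \<partial>lborel))
            *\<^sub>R x \<partial>lborel)"

end

theory Submission
  imports Defs
begin

lemma L1:
  fixes m s A B C :: real
  assumes s: "s > 0" and nn: "\<And>y. 0 \<le> A + B*y + C*y\<^sup>2"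
  shows "(\<integral>\<^sup>+y. ennreal (normal_density m s y * (A + B*y + C*y\<^sup>2)) \<partial>lborel)
        = ennreal (A + B*m + C*(s\<^sup>2 + m\<^sup>2))"
proof -
  have h0: "has_bochner_integral lborel (\<lambda>y. normal_density m s y) 1"
    using normal_moment_even[OF s, where k=0 and \<mu>=m] by simp
  have h1: "has_bochner_integral lborel (\<lambda>y. normal_density m s y * y) m"
    using normal_moment_nz_1[OF s] .
  have h2': "has_bochner_integral lborel (\<lambda>y. normal_density m s y * (y - m)^2) (s\<^sup>2)"
    using normal_moment_even[OF s, where k=1 and \<mu>=m] by (simp add: power2_eq_square)
  have "has_bochner_integral lborel (\<lambda>y. normal_density m s y * (y - m)^2 + 2*m*(normal_density m s y * y) - m\<^sup>2 * normal_density m s y) (s\<^sup>2 + 2*m*m - m\<^sup>2*1)"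
    by (intro has_bochner_integral_add has_bochner_integral_diff has_bochner_integral_mult_right h0 h1 h2')
  then have h2: "has_bochner_integral lborel (\<lambda>y. normal_density m s y * y\<^sup>2) (s\<^sup>2 + m\<^sup>2)"
    by (rule has_bochner_integral_cong[THEN iffD1, rotated -1]) (auto simp: power2_eq_square algebra_simps)
  have "has_bochner_integral lborel (\<lambda>y. A * normal_density m s y + B*(normal_density m s y * y) + C*(normal_density m s y * y\<^sup>2)) (A*1 + B*m + C*(s\<^sup>2 + m\<^sup>2))"
    by (intro has_bochner_integral_add has_bochner_integral_mult_right h0 h1 h2)
  then have H: "has_bochner_integral lborel (\<lambda>y. normal_density m s y * (A + B*y + C*y\<^sup>2)) (A + B*m + C*(s\<^sup>2 + m\<^sup>2))"
    by (rule has_bochner_integral_cong[THEN iffD1, rotated -1]) (auto simp: algebra_simps)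
  show ?thesis
    using H nn
    by (subst nn_integral_eq_integral) (auto simp: has_bochner_integral_iff intro!: mult_nonneg_nonneg)
qed


lemma L2:
  fixes I :: "'i set"
  assumes "finite I"
  shows "\<And>a c. (\<integral>\<^sup>+f. ennreal ((\<Prod>i\<in>I. normal_density 0 1 (f i)) * (a + (\<Sum>i\<in>I. c i * f i))\<^sup>2)
           \<partial>PiM I (\<lambda>_. lborel)) = ennreal (a\<^sup>2 + (\<Sum>i\<in>I. (c i)\<^sup>2))"
  using assms
proof (induction I rule: finite_induct)
  case empty
  then show ?case by (simp add: PiM_empty nn_integral_count_space_finite)
next
  case (insert j A a c)
  interpret product_sigma_finite "\<lambda>_. lborel :: real measure" by standard
  let ?P = "\<lambda>f. (\<Prod>i\<in>A. normal_density 0 1 (f i))"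
  let ?S = "\<lambda>f. (\<Sum>i\<in>A. c i * f i)"
  have "(\<integral>\<^sup>+f. ennreal ((\<Prod>i\<in>insert j A. normal_density 0 1 (f i)) * (a + (\<Sum>i\<in>insert j A. c i * f i))\<^sup>2)
           \<partial>PiM (insert j A) (\<lambda>_. lborel))
     = (\<integral>\<^sup>+x. (\<integral>\<^sup>+y. ennreal ((\<Prod>i\<in>insert j A. normal_density 0 1 ((x(j:=y)) i)) * (a + (\<Sum>i\<in>insert j A. c i * (x(j:=y)) i))\<^sup>2) \<partial>lborel) \<partial>PiM A (\<lambda>_. lborel))"
    using insert by (subst product_nn_integral_insert) auto
  also have "\<dots> = (\<integral>\<^sup>+x. (\<integral>\<^sup>+y. ennreal (?P x) * ennreal (normal_density 0 1 y * ((a + ?S x)\<^sup>2 + (2 * (a + ?S x) * c j) * y + (c j)\<^sup>2 * y\<^sup>2)) \<partial>lborel) \<partial>PiM A (\<lambda>_. lborel))"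
  proof (intro nn_integral_cong)
    fix x y
    have p: "(\<Prod>i\<in>insert j A. normal_density 0 1 ((x(j:=y)) i)) = normal_density 0 1 y * ?P x"
    proof -
      have "(\<Prod>i\<in>A. normal_density 0 1 ((x(j:=y)) i)) = ?P x"
        using insert by (intro prod.cong) auto
      then show ?thesis using insert by simp
    qed
    have s: "(\<Sum>i\<in>insert j A. c i * (x(j:=y)) i) = c j * y + ?S x"
    proof -
      have "(\<Sum>i\<in>A. c i * (x(j:=y)) i) = ?S x"
        using insert by (intro sum.cong) auto
      then show ?thesis using insert by simp
    qed
    show "ennreal ((\<Prod>i\<in>insert j A. normal_density 0 1 ((x(j:=y)) i)) * (a + (\<Sum>i\<in>insert j A. c i * (x(j:=y)) i))\<^sup>2)
       = ennreal (?P x) * ennreal (normal_density 0 1 y * ((a + ?S x)\<^sup>2 + (2 * (a + ?S x) * c j) * y + (c j)\<^sup>2 * y\<^sup>2))"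
      unfolding p s
      by (subst ennreal_mult'[symmetric]) (auto intro!: prod_nonneg simp: power2_eq_square algebra_simps)
  qed
  also have "\<dots> = (\<integral>\<^sup>+x. ennreal (?P x) * ennreal ((a + ?S x)\<^sup>2 + (c j)\<^sup>2) \<partial>PiM A (\<lambda>_. lborel))"
  proof (intro nn_integral_cong)
    fix x
    have nn: "\<And>y. 0 \<le> (a + ?S x)\<^sup>2 + (2 * (a + ?S x) * c j) * y + (c j)\<^sup>2 * y\<^sup>2"
    proof -
      fix y
      have "(a + ?S x)\<^sup>2 + (2 * (a + ?S x) * c j) * y + (c j)\<^sup>2 * y\<^sup>2 = (a + ?S x + c j * y)\<^sup>2"
        by (simp add: power2_eq_square algebra_simps)
      then show "0 \<le> (a + ?S x)\<^sup>2 + (2 * (a + ?S x) * c j) * y + (c j)\<^sup>2 * y\<^sup>2" by simp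
    qed
    show "(\<integral>\<^sup>+y. ennreal (?P x) * ennreal (normal_density 0 1 y * ((a + ?S x)\<^sup>2 + (2 * (a + ?S x) * c j) * y + (c j)\<^sup>2 * y\<^sup>2)) \<partial>lborel)
      = ennreal (?P x) * ennreal ((a + ?S x)\<^sup>2 + (c j)\<^sup>2)"
      apply (subst nn_integral_cmult)
       apply measurable
       apply (subst L1[OF _ nn])
      by (simp_all add: ennreal_plus[symmetric] del: ennreal_plus)
  qed
  also have "\<dots> = (\<integral>\<^sup>+x. ennreal (?P x * (a + ?S x)\<^sup>2) + ennreal ((c j)\<^sup>2) * ennreal (?P x * (1 + (\<Sum>i\<in>A. 0 * x i))\<^sup>2) \<partial>PiM A (\<lambda>_. lborel))"
    by (intro nn_integral_cong)
       (auto simp: ennreal_mult'[symmetric] ennreal_plus[symmetric] prod_nonneg distrib_left mult.commute simp del: ennreal_plus)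
  also have "\<dots> = ennreal (a\<^sup>2 + (\<Sum>i\<in>A. (c i)\<^sup>2)) + ennreal ((c j)\<^sup>2) * ennreal (1\<^sup>2 + (\<Sum>i\<in>A. 0\<^sup>2))"
    using insert.IH[of a c] insert.IH[of 1 "\<lambda>_. 0"]
    by (subst nn_integral_add) (auto simp: nn_integral_cmult)
  also have "\<dots> = ennreal (a\<^sup>2 + (\<Sum>i\<in>insert j A. (c i)\<^sup>2))"
    using insert by (simp add: ennreal_plus[symmetric] sum_nonneg del: ennreal_plus)
  finally show ?case .
qed


lemma Basis_vec_real: "(Basis :: (real^'d) set) = range (\<lambda>i. axis i 1)"
  by (auto simp: Basis_vec_def)

lemma D1:
  fixes v :: "real ^ 'd" and a :: real
  shows "(\<integral>\<^sup>+x. ennreal (std_gauss_vec_density x * (a + x \<bullet> v)\<^sup>2) \<partial>lborel) = ennreal (a\<^sup>2 + (norm v)\<^sup>2)"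
proof -
  let ?T = "\<lambda>f. \<Sum>b\<in>(Basis :: (real^'d) set). f b *\<^sub>R b"
  have comp: "?T f \<bullet> b' = f b'" if "b' \<in> Basis" for f b'
    using that by (simp add: inner_sum_left inner_Basis if_distrib cong: if_cong)
  have "(\<integral>\<^sup>+x. ennreal (std_gauss_vec_density x * (a + x \<bullet> v)\<^sup>2) \<partial>lborel)
     = (\<integral>\<^sup>+x. ennreal (std_gauss_vec_density x * (a + x \<bullet> v)\<^sup>2) \<partial>distr (\<Pi>\<^sub>M b\<in>Basis. lborel) borel ?T)"
    by (subst lborel_eq[where 'a="real^'d"]) (rule refl)
  also have "\<dots> = (\<integral>\<^sup>+f. ennreal (std_gauss_vec_density (?T f) * (a + ?T f \<bullet> v)\<^sup>2) \<partial>(\<Pi>\<^sub>M b\<in>Basis. lborel))"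
    by (subst nn_integral_distr) (auto simp: std_gauss_vec_density_def)
  also have "\<dots> = (\<integral>\<^sup>+f. ennreal ((\<Prod>b\<in>Basis. normal_density 0 1 (f b)) * (a + (\<Sum>b\<in>Basis. (v \<bullet> b) * f b))\<^sup>2) \<partial>(\<Pi>\<^sub>M b\<in>Basis. lborel))"
  proof (intro nn_integral_cong)
    fix f :: "real^'d \<Rightarrow> real"
    have "std_gauss_vec_density (?T f) = (\<Prod>i\<in>UNIV. normal_density 0 1 (f (axis i 1)))"
      unfolding std_gauss_vec_density_def cart_eq_inner_axis
      by (intro prod.cong refl) (subst comp, auto simp: Basis_vec_real)
    also have "\<dots> = (\<Prod>b\<in>Basis. normal_density 0 1 (f b))"
      unfolding Basis_vec_real
      by (subst prod.reindex) (auto simp: inj_on_def axis_eq_axis)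
    finally have 1: "std_gauss_vec_density (?T f) = (\<Prod>b\<in>Basis. normal_density 0 1 (f b))" .
    have 2: "?T f \<bullet> v = (\<Sum>b\<in>Basis. (v \<bullet> b) * f b)"
      by (simp add: inner_sum_left inner_sum_right mult.commute inner_commute[of _ v])
    show "ennreal (std_gauss_vec_density (?T f) * (a + ?T f \<bullet> v)\<^sup>2) = ennreal ((\<Prod>b\<in>Basis. normal_density 0 1 (f b)) * (a + (\<Sum>b\<in>Basis. (v \<bullet> b) * f b))\<^sup>2)"
      by (simp only: 1 2)
  qed
  also have "\<dots> = ennreal (a\<^sup>2 + (\<Sum>b\<in>Basis. (v \<bullet> b)\<^sup>2))"
    by (rule L2) simp
  also have "(\<Sum>b\<in>Basis. (v \<bullet> b)\<^sup>2) = (norm v)\<^sup>2"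
    unfolding power2_norm_eq_inner by (subst euclidean_inner[of v v]) (simp add: power2_eq_square)
  finally show ?thesis .
qed


lemma abs_tanh_le1: "\<bar>tanh (x::real)\<bar> \<le> 1"
  using tanh_real_bounds[of x] by auto

lemma gbound:
  fixes \<sigma> \<mu> t :: real
  assumes s: "\<sigma> > 0"
  shows "\<bar>\<integral>y. normal_density \<mu> \<sigma> y * (tanh (t * y / \<sigma>\<^sup>2) * y) \<partial>lborel\<bar> \<le> sqrt (\<sigma>\<^sup>2 + \<mu>\<^sup>2)"
proof (cases "integrable lborel (\<lambda>y. normal_density \<mu> \<sigma> y * (tanh (t * y / \<sigma>\<^sup>2) * y))")
  case False
  then show ?thesis by (simp add: not_integrable_integral_eq)
next
  case True
  define K where "K = sqrt (\<sigma>\<^sup>2 + \<mu>\<^sup>2)"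
  have Kpos: "K > 0" unfolding K_def using s by (simp add: add_pos_nonneg)
  have K2: "K\<^sup>2 = \<sigma>\<^sup>2 + \<mu>\<^sup>2" unfolding K_def by simp
  have nn: "\<And>y. 0 \<le> K/2 + 0*y + (1/(2*K))*y\<^sup>2" using Kpos by simp
  have pt: "\<bar>y\<bar> \<le> K/2 + 0*y + (1/(2*K))*y\<^sup>2" for y
  proof -
    have "2*K*\<bar>y\<bar> \<le> K\<^sup>2 + y\<^sup>2"
      using sum_squares_bound[of K "\<bar>y\<bar>"] by (simp add: power2_eq_square)
    then show ?thesis using Kpos by (simp add: field_simps power2_eq_square)
  qed
  have "ennreal \<bar>\<integral>y. normal_density \<mu> \<sigma> y * (tanh (t * y / \<sigma>\<^sup>2) * y) \<partial>lborel\<bar>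
      \<le> (\<integral>\<^sup>+y. norm (normal_density \<mu> \<sigma> y * (tanh (t * y / \<sigma>\<^sup>2) * y)) \<partial>lborel)"
    using integral_norm_bound_ennreal[OF True] by simp
  also have "\<dots> \<le> (\<integral>\<^sup>+y. ennreal (normal_density \<mu> \<sigma> y * (K/2 + 0*y + (1/(2*K))*y\<^sup>2)) \<partial>lborel)"
  proof (intro nn_integral_mono ennreal_leI)
    fix y
    have "norm (normal_density \<mu> \<sigma> y * (tanh (t * y / \<sigma>\<^sup>2) * y)) = normal_density \<mu> \<sigma> y * (\<bar>tanh (t * y / \<sigma>\<^sup>2)\<bar> * \<bar>y\<bar>)"
      by (simp add: abs_mult)
    also have "\<dots> \<le> normal_density \<mu> \<sigma> y * (1 * \<bar>y\<bar>)"
      by (intro mult_left_mono mult_right_mono abs_tanh_le1) auto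
    also have "\<dots> \<le> normal_density \<mu> \<sigma> y * (K/2 + 0*y + (1/(2*K))*y\<^sup>2)"
      using pt[of y] by (intro mult_left_mono) auto
    finally show "norm (normal_density \<mu> \<sigma> y * (tanh (t * y / \<sigma>\<^sup>2) * y)) \<le> normal_density \<mu> \<sigma> y * (K/2 + 0*y + (1/(2*K))*y\<^sup>2)" .
  qed
  also have "\<dots> = ennreal (K/2 + 0*\<mu> + (1/(2*K))*(\<sigma>\<^sup>2 + \<mu>\<^sup>2))"
    by (rule L1[OF s nn])
  also have "K/2 + 0*\<mu> + (1/(2*K))*(\<sigma>\<^sup>2 + \<mu>\<^sup>2) = K"
    using Kpos unfolding K2[symmetric] by (simp add: field_simps power2_eq_square)
  finally show ?thesis unfolding K_def using Kpos
    by (simp add: ennreal_le_iff)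
qed


lemma meas_sgv[measurable]: "std_gauss_vec_density \<in> borel_measurable (borel :: (real^'d) measure)"
  unfolding std_gauss_vec_density_def cart_eq_inner_axis by measurable

lemma ennreal3:
  fixes a1 a2 a3 u1 u2 u3 :: real
  assumes "0\<le>a1" "0\<le>a2" "0\<le>a3" "0\<le>u1" "0\<le>u2" "0\<le>u3"
  shows "ennreal (a1*u1 + a2*u2 + a3*u3) = ennreal a1 * ennreal u1 + ennreal a2 * ennreal u2 + ennreal a3 * ennreal u3"
proof -
  have n: "0 \<le> a1*u1" "0 \<le> a2*u2" "0 \<le> a3*u3" using assms by auto
  have s1: "ennreal (a1*u1 + a2*u2 + a3*u3) = ennreal (a1*u1 + a2*u2) + ennreal (a3*u3)"
    using n by (intro ennreal_plus) auto
  have s2: "ennreal (a1*u1 + a2*u2) = ennreal (a1*u1) + ennreal (a2*u2)"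
    using n by (intro ennreal_plus) auto
  show ?thesis unfolding s1 s2 using assms by (simp add: ennreal_mult)
qed

theorem lemma22:
  fixes \<sigma> :: real and \<beta>s \<beta> :: "real ^ 'd"
  assumes "\<sigma> > 0"
  shows "norm (EM_M \<sigma> \<beta>s \<beta>) \<le> 3 * sqrt (\<sigma>\<^sup>2 + (norm \<beta>s)\<^sup>2)"
proof -
  define p where "p = (std_gauss_vec_density :: real^'d \<Rightarrow> real)"
  define g where "g = (\<lambda>x::real^'d. (\<integral>y. normal_density (x \<bullet> \<beta>s) \<sigma> y * (tanh ((x \<bullet> \<beta>) * y / \<sigma>\<^sup>2) * y) \<partial>lborel))"
  define F where "F = (\<lambda>x. (p x * g x) *\<^sub>R x)"
  define c where "c = sqrt (\<sigma>\<^sup>2 + (norm \<beta>s)\<^sup>2)"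
  have cpos: "c > 0" unfolding c_def using assms by (simp add: add_pos_nonneg)
  have c2: "c\<^sup>2 = \<sigma>\<^sup>2 + (norm \<beta>s)\<^sup>2" unfolding c_def by simp
  have pnn: "p x \<ge> 0" for x unfolding p_def std_gauss_vec_density_def by (simp add: prod_nonneg)
  have Mdef: "EM_M \<sigma> \<beta>s \<beta> = integral\<^sup>L lborel F"
    unfolding EM_M_def F_def p_def g_def ..
  define M where "M = EM_M \<sigma> \<beta>s \<beta>"
  have "norm M \<le> c"
  proof (cases "integrable lborel F")
    case False
    then show ?thesis using cpos by (simp add: M_def Mdef not_integrable_integral_eq)
  next
    case True
    show ?thesis
    proof (cases "M = 0")
      case True then show ?thesis using cpos by simp
    next
      case False
      define m where "m = norm M"
      have mpos: "m > 0" using False unfolding m_def by simp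
      define r where "r = m / c"
      have rpos: "r > 0" unfolding r_def using mpos cpos by simp
      have MM: "M \<bullet> M = (\<integral>x. F x \<bullet> M \<partial>lborel)"
        using True by (simp add: M_def Mdef)
      have intFM: "integrable lborel (\<lambda>x. F x \<bullet> M)" using True by simp
      have "ennreal (m\<^sup>2) = ennreal (norm (\<integral>x. F x \<bullet> M \<partial>lborel))"
      proof -
        have L0: "0 \<le> (\<integral>x. F x \<bullet> M \<partial>lborel)" using MM inner_ge_zero[of M] by simp
        show ?thesis using L0 by (simp add: m_def power2_norm_eq_inner MM)
      qed
      also have "\<dots> \<le> (\<integral>\<^sup>+x. norm (F x \<bullet> M) \<partial>lborel)"
        by (rule integral_norm_bound_ennreal[OF intFM])
      also have "\<dots> \<le> (\<integral>\<^sup>+x. ennreal (r/2) * ennreal (p x * (\<sigma> + x \<bullet> 0)\<^sup>2) + ennreal (r/2) * ennreal (p x * (0 + x \<bullet> \<beta>s)\<^sup>2)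
                          + ennreal (1/(2*r)) * ennreal (p x * (0 + x \<bullet> M)\<^sup>2) \<partial>lborel)"
      proof (intro nn_integral_mono)
        fix x :: "real^'d"
        have gb: "\<bar>g x\<bar> \<le> sqrt (\<sigma>\<^sup>2 + (x \<bullet> \<beta>s)\<^sup>2)"
          unfolding g_def by (rule gbound[OF assms])
        have am: "sqrt (\<sigma>\<^sup>2 + (x \<bullet> \<beta>s)\<^sup>2) * \<bar>x \<bullet> M\<bar> \<le> r/2 * (\<sigma>\<^sup>2 + (x \<bullet> \<beta>s)\<^sup>2) + 1/(2*r) * (x \<bullet> M)\<^sup>2"
        proof -
          define K where "K = sqrt (\<sigma>\<^sup>2 + (x \<bullet> \<beta>s)\<^sup>2)"
          have K2: "K\<^sup>2 = \<sigma>\<^sup>2 + (x \<bullet> \<beta>s)\<^sup>2" unfolding K_def by simp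
          have "0 \<le> (r*K - \<bar>x \<bullet> M\<bar>)\<^sup>2" by simp
          then have "2*r*K*\<bar>x \<bullet> M\<bar> \<le> r\<^sup>2*K\<^sup>2 + (x \<bullet> M)\<^sup>2"
            by (simp add: power2_eq_square algebra_simps)
          then have "K*\<bar>x \<bullet> M\<bar> \<le> r/2 * K\<^sup>2 + 1/(2*r) * (x \<bullet> M)\<^sup>2"
            using rpos by (simp add: field_simps power2_eq_square)
          then show ?thesis unfolding K2 unfolding K_def .
        qed
        have "norm (F x \<bullet> M) = p x * (\<bar>g x\<bar> * \<bar>x \<bullet> M\<bar>)"
          using pnn[of x] by (simp add: F_def abs_mult)
        also have "\<dots> \<le> p x * (sqrt (\<sigma>\<^sup>2 + (x \<bullet> \<beta>s)\<^sup>2) * \<bar>x \<bullet> M\<bar>)"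
          using gb pnn[of x] by (intro mult_left_mono mult_right_mono) auto
        also have "\<dots> \<le> p x * (r/2 * (\<sigma>\<^sup>2 + (x \<bullet> \<beta>s)\<^sup>2) + 1/(2*r) * (x \<bullet> M)\<^sup>2)"
          using am pnn[of x] by (intro mult_left_mono) auto
        also have "\<dots> = r/2 * (p x * (\<sigma> + x \<bullet> 0)\<^sup>2) + r/2 * (p x * (0 + x \<bullet> \<beta>s)\<^sup>2) + 1/(2*r) * (p x * (0 + x \<bullet> M)\<^sup>2)"
          by (simp add: algebra_simps)
        finally have "norm (F x \<bullet> M) \<le> r/2 * (p x * (\<sigma> + x \<bullet> 0)\<^sup>2) + r/2 * (p x * (0 + x \<bullet> \<beta>s)\<^sup>2) + 1/(2*r) * (p x * (0 + x \<bullet> M)\<^sup>2)" .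
        then have "ennreal (norm (F x \<bullet> M)) \<le> ennreal (r/2 * (p x * (\<sigma> + x \<bullet> 0)\<^sup>2) + r/2 * (p x * (0 + x \<bullet> \<beta>s)\<^sup>2) + 1/(2*r) * (p x * (0 + x \<bullet> M)\<^sup>2))"
          by (rule ennreal_leI)
        also have "\<dots> = ennreal (r/2) * ennreal (p x * (\<sigma> + x \<bullet> 0)\<^sup>2) + ennreal (r/2) * ennreal (p x * (0 + x \<bullet> \<beta>s)\<^sup>2)
                          + ennreal (1/(2*r)) * ennreal (p x * (0 + x \<bullet> M)\<^sup>2)"
          using rpos pnn[of x] by (intro ennreal3) auto
        finally show "ennreal (norm (F x \<bullet> M)) \<le> ennreal (r/2) * ennreal (p x * (\<sigma> + x \<bullet> 0)\<^sup>2) + ennreal (r/2) * ennreal (p x * (0 + x \<bullet> \<beta>s)\<^sup>2)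
                          + ennreal (1/(2*r)) * ennreal (p x * (0 + x \<bullet> M)\<^sup>2)" .
      qed
      also have "\<dots> = ennreal (r/2) * ennreal (\<sigma>\<^sup>2 + (norm (0::real^'d))\<^sup>2) + ennreal (r/2) * ennreal (0\<^sup>2 + (norm \<beta>s)\<^sup>2)
                      + ennreal (1/(2*r)) * ennreal (0\<^sup>2 + (norm M)\<^sup>2)"
      proof -
        have i1: "(\<integral>\<^sup>+x. ennreal (r/2) * ennreal (p x * (\<sigma> + x \<bullet> 0)\<^sup>2) \<partial>lborel) = ennreal (r/2) * ennreal (\<sigma>\<^sup>2 + (norm (0::real^'d))\<^sup>2)"
          unfolding p_def by (subst nn_integral_cmult, measurable, subst D1, rule refl)
        have i2: "(\<integral>\<^sup>+x. ennreal (r/2) * ennreal (p x * (0 + x \<bullet> \<beta>s)\<^sup>2) \<partial>lborel) = ennreal (r/2) * ennreal (0\<^sup>2 + (norm \<beta>s)\<^sup>2)"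
          unfolding p_def by (subst nn_integral_cmult, measurable, subst D1, rule refl)
        have i3: "(\<integral>\<^sup>+x. ennreal (1/(2*r)) * ennreal (p x * (0 + x \<bullet> M)\<^sup>2) \<partial>lborel) = ennreal (1/(2*r)) * ennreal (0\<^sup>2 + (norm M)\<^sup>2)"
          unfolding p_def by (subst nn_integral_cmult, measurable, subst D1, rule refl)
        show ?thesis
          unfolding i1[symmetric] i2[symmetric] i3[symmetric] unfolding p_def
          by (rule trans[OF nn_integral_add], measurable, rule arg_cong2[where f="(+)"], rule nn_integral_add, measurable)
      qed
      also have "\<dots> = ennreal (m * c)"
      proof -
        have "r/2 * (\<sigma>\<^sup>2 + 0) + r/2 * (0 + (norm \<beta>s)\<^sup>2) + 1/(2*r) * (0 + m\<^sup>2) = m * c"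
        proof -
          have a: "r/2 * (\<sigma>\<^sup>2 + 0) + r/2 * (0 + (norm \<beta>s)\<^sup>2) = r/2 * c\<^sup>2"
            using c2 by (simp add: algebra_simps)
          have b: "r/2 * c\<^sup>2 = m * c / 2" unfolding r_def using cpos by (simp add: field_simps power2_eq_square)
          have d: "1/(2*r) * (0 + m\<^sup>2) = m * c / 2" unfolding r_def using cpos mpos by (simp add: field_simps power2_eq_square)
          show ?thesis using a b d by linarith
        qed
        then show ?thesis
          using rpos by (simp add: m_def ennreal_mult[symmetric] ennreal_plus[symmetric] del: ennreal_plus)
      qed
      finally have "m\<^sup>2 \<le> m * c"
        using mpos cpos by (simp add: ennreal_le_iff)
      then show ?thesis using mpos unfolding m_def[symmetric] by (simp add: power2_eq_square)
    qed
  qed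
  then show ?thesis using cpos unfolding M_def c_def by linarith
qed

end
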